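(* Let $\mathfrak{B}_i=\ker R_i\left(\frac{d}{dt}\right)$, $i=1,2$, where $R_1,R_2\in\mathbb{R}^{\tt w\times\tt w}[\xi]$ are nonsingular and $R_2R_1^{-1}$ is strictly proper. Let $n_i:=\deg(\det(R_i))$, $i=1,2$. Then $n_2<n_1$. Moreover, there exist $X_1^\prime\in\mathbb{R}^{(n_1-n_2)\times\tt w}[\xi]$ and $X_2\in\mathbb{R}^{n_2\times\tt w}[\xi]$ such that $X_2\left(\frac{d}{dt}\right)$ is a minimal state map for $\mathfrak{B}_2$ and $X_1\left(\frac{d}{dt}\right):=\mathrm{col}\left(X_2\left(\frac{d}{dt}\right),X_1^\prime\left(\frac{d}{dt}\right)\right)$ is a minimal state map for $\mathfrak{B}_1$. Finally, there exists a constant matrix $\Pi\in\mathbb{R}^{(n_1-n_2)\times n_2}$ such that $X_1^\prime(\xi)\ \mathrm{mod}\ R_2=\Pi X_2(\xi)$.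
   Context: $\ker R\left(\frac{d}{dt}\right)$ denotes the set of $\mathfrak{C}^\infty(\mathbb{R},\mathbb{R}^{\tt w})$ solutions $w$ of $R\left(\frac{d}{dt}\right)w=0$; with $R$ square nonsingular this is an autonomous linear differential behaviour. For nonsingular $R\in\mathbb{R}^{\tt w\times\tt w}[\xi]$, the state space of $\ker R\left(\frac{d}{dt}\right)$ is the finite-dimensional real vector space $\mathfrak{X}(R):=\{f\in\mathbb{R}^{1\times\tt w}[\xi]\mid fR^{-1}\text{ is strictly proper}\}$, of dimension $\deg(\det(R))$; a (minimal) state map is obtained by stacking a set of generators (a basis) of $\mathfrak{X}(R)$ as rows of a polynomial matrix $X$ and applying $X\left(\frac{d}{dt}\right)$. For $f\in\mathbb{R}^{1\times\tt w}[\xi]$, writing uniquely $fR^{-1}=s+n$ with $s$ strictly proper rational and $n$ polynomial, the canonical representative of $f$ modulo $R$ is $f\ \mathrm{mod}\ R:=sR$ (extended row-wise to polynomial matrices). *)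

theory Defs
  imports "HOL-Computational_Algebra.Polynomial" "HOL-Computational_Algebra.Fraction_Field"
    "Jordan_Normal_Form.Determinant"
begin

(* Polynomial matrices R in R^{w x w}[xi] are "real poly mat"; row vectors in
   R^{1 x w}[xi] are "real poly vec" of dimension w. *)

definition lift_rat :: "real poly \<Rightarrow> real poly fract" where
  "lift_rat p = Fract p 1"

definition lift_mat :: "real poly mat \<Rightarrow> real poly fract mat" where
  "lift_mat R = map_mat lift_rat R"

definition lift_vec :: "real poly vec \<Rightarrow> real poly fract vec" where
  "lift_vec f = map_vec lift_rat f"

definition nonsingular :: "real poly mat \<Rightarrow> bool" where
  "nonsingular R \<longleftrightarrow> square_mat R \<and> det R \<noteq> 0"

definition rat_inverse :: "real poly mat \<Rightarrow> real poly fract mat" where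
  "rat_inverse R = inverse (det (lift_mat R)) \<cdot>\<^sub>m adj_mat (lift_mat R)"

definition strictly_proper :: "real poly fract \<Rightarrow> bool" where
  "strictly_proper x \<longleftrightarrow> x = 0 \<or>
     (\<exists>p q. q \<noteq> 0 \<and> x = Fract p q \<and> degree p < degree q)"

definition strictly_proper_mat :: "real poly fract mat \<Rightarrow> bool" where
  "strictly_proper_mat M \<longleftrightarrow>
     (\<forall>i < dim_row M. \<forall>j < dim_col M. strictly_proper (M $$ (i,j)))"

definition strictly_proper_vec :: "real poly fract vec \<Rightarrow> bool" where
  "strictly_proper_vec v \<longleftrightarrow> (\<forall>j < dim_vec v. strictly_proper (v $ j))"

(* row vector times matrix  v M  is written  transpose_mat M *v v *)
definition state_space :: "real poly mat \<Rightarrow> real poly vec set" where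
  "state_space R = {f. dim_vec f = dim_row R \<and>
      strictly_proper_vec (transpose_mat (rat_inverse R) *\<^sub>v lift_vec f)}"

definition row_comb :: "(nat \<Rightarrow> real) \<Rightarrow> real poly mat \<Rightarrow> real poly vec" where
  "row_comb c X = vec (dim_col X) (\<lambda>j. \<Sum>i<dim_row X. smult (c i) (X $$ (i,j)))"

definition rows_basis_of :: "real poly mat \<Rightarrow> real poly vec set \<Rightarrow> bool" where
  "rows_basis_of X V \<longleftrightarrow>
     (\<forall>i < dim_row X. row X i \<in> V) \<and>
     (\<forall>c. row_comb c X = 0\<^sub>v (dim_col X) \<longrightarrow> (\<forall>i < dim_row X. c i = 0)) \<and>
     (\<forall>f \<in> V. \<exists>c. f = row_comb c X)"

definition minimal_state_map :: "real poly mat \<Rightarrow> real poly mat \<Rightarrow> bool" where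
  "minimal_state_map X R \<longleftrightarrow> dim_col X = dim_row R \<and> rows_basis_of X (state_space R)"

definition mod_row :: "real poly vec \<Rightarrow> real poly mat \<Rightarrow> real poly vec" where
  "mod_row f R = (THE g. dim_vec g = dim_vec f \<and>
     (\<exists>s n. strictly_proper_vec s \<and> dim_vec s = dim_vec f \<and> dim_vec n = dim_vec f \<and>
        transpose_mat (rat_inverse R) *\<^sub>v lift_vec f = s + lift_vec n \<and>
        lift_vec g = transpose_mat (lift_mat R) *\<^sub>v s))"

definition mod_mat :: "real poly mat \<Rightarrow> real poly mat \<Rightarrow> real poly mat" where
  "mod_mat X R = mat (dim_row X) (dim_col X) (\<lambda>(i,j). mod_row (row X i) R $ j)"

definition const_mat :: "real mat \<Rightarrow> real poly mat" where
  "const_mat P = map_mat (\<lambda>x. [:x:]) P"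

end

theory Submission
  imports Defs "HOL-Library.Function_Algebras" "Jordan_Normal_Form.Gauss_Jordan_Elimination"
begin


lemma lift_rat_eq: "lift_rat = to_fract"
  by (rule ext) (simp add: lift_rat_def to_fract_def)

lemma lift_mat_eq: "lift_mat R = map_mat to_fract R"
  by (simp add: lift_mat_def lift_rat_eq)

lemma lift_vec_eq: "lift_vec f = map_vec to_fract f"
  by (simp add: lift_vec_def lift_rat_eq)

interpretation tf: inj_comm_ring_hom "to_fract :: real poly \<Rightarrow> real poly fract"
  by (unfold_locales, auto)

lemma Fract_zero_iff: "q \<noteq> 0 \<Longrightarrow> (Fract p q = 0) \<longleftrightarrow> p = (0::real poly)"
  by (simp add: Zero_fract_def eq_fract)

lemma sp_Fract:
  assumes q: "q \<noteq> 0"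
  shows "strictly_proper (Fract p q) \<longleftrightarrow> (p = 0 \<or> degree p < degree (q::real poly))"
proof
  assume "strictly_proper (Fract p q)"
  then consider "Fract p q = 0" | p' q' where "q' \<noteq> 0" "Fract p q = Fract p' q'" "degree p' < degree q'"
    unfolding strictly_proper_def by blast
  then show "p = 0 \<or> degree p < degree q"
  proof cases
    case 1 then show ?thesis using q Fract_zero_iff by blast
  next
    case 2
    then have e: "p * q' = p' * q" using q by (simp add: eq_fract)
    show ?thesis
    proof (cases "p = 0")
      case False
      then have "p' \<noteq> 0" using e 2 q by auto
      have "degree p + degree q' = degree p' + degree q"
        using e False \<open>p' \<noteq> 0\<close> q 2 by (metis degree_mult_eq)
      then show ?thesis using 2 by linarith
    qed simp
  qed
next
  assume "p = 0 \<or> degree p < degree q"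
  then show "strictly_proper (Fract p q)"
    unfolding strictly_proper_def using q Fract_zero_iff by blast
qed

lemma sp_0[simp]: "strictly_proper 0" by (simp add: strictly_proper_def)

lemma sp_add:
  assumes "strictly_proper x" "strictly_proper y"
  shows "strictly_proper (x + y)"
proof -
  obtain a b where x: "x = Fract a b" "b \<noteq> 0" by (cases x)
  obtain c d where y: "y = Fract c d" "d \<noteq> 0" by (cases y)
  have a: "a = 0 \<or> degree a < degree b" using assms(1) x sp_Fract by auto
  have c: "c = 0 \<or> degree c < degree d" using assms(2) y sp_Fract by auto
  show ?thesis
  proof (cases "a = 0")
    case True then have "x = 0" using x Fract_zero_iff by simp
    then show ?thesis using assms by simp
  next
    case an: False
    show ?thesis
    proof (cases "c = 0")
      case True then have "y = 0" using y Fract_zero_iff by simp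
      then show ?thesis using assms by simp
    next
      case cn: False
      have "x + y = Fract (a * d + c * b) (b * d)" using x y by simp
      moreover have "degree (a * d + c * b) < degree (b * d)"
      proof -
        have "degree (a * d) < degree (b * d)" using an a y x by (simp add: degree_mult_eq)
        moreover have "degree (c * b) < degree (b * d)" using cn c y x by (simp add: degree_mult_eq)
        ultimately have m: "max (degree (a*d)) (degree (c*b)) < degree (b*d)" by simp
        show ?thesis using degree_add_le_max[of "a*d" "c*b"] m by linarith
      qed
      ultimately show ?thesis using x y by (simp add: sp_Fract)
    qed
  qed
qed

lemma sp_mult:
  assumes "strictly_proper x" "strictly_proper y"
  shows "strictly_proper (x * y)"
proof -
  obtain a b where x: "x = Fract a b" "b \<noteq> 0" by (cases x)
  obtain c d where y: "y = Fract c d" "d \<noteq> 0" by (cases y)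
  have a: "a = 0 \<or> degree a < degree b" using assms(1) x sp_Fract by auto
  have c: "c = 0 \<or> degree c < degree d" using assms(2) y sp_Fract by auto
  have "x * y = Fract (a * c) (b * d)" using x y by simp
  moreover have "a * c = 0 \<or> degree (a * c) < degree (b * d)"
  proof (cases "a = 0 \<or> c = 0")
    case False then show ?thesis using a c x y by (auto simp: degree_mult_eq)
  qed auto
  ultimately show ?thesis using x y by (simp add: sp_Fract)
qed

lemma sp_const_mult:
  assumes "strictly_proper y" "degree a = 0"
  shows "strictly_proper (to_fract a * y)"
proof -
  obtain c d where y: "y = Fract c d" "d \<noteq> 0" by (cases y)
  have c: "c = 0 \<or> degree c < degree d" using assms(1) y sp_Fract by auto
  have "to_fract a * y = Fract (a * c) d" using y by (simp add: to_fract_def)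
  moreover have "a * c = 0 \<or> degree (a * c) < degree d"
  proof (cases "c = 0")
    case False
    have "degree (a*c) \<le> degree a + degree c" by (rule degree_mult_le)
    then show ?thesis using c False assms(2) by linarith
  qed simp
  ultimately show ?thesis using y by (simp add: sp_Fract)
qed

lemma sp_uminus: "strictly_proper x \<Longrightarrow> strictly_proper (- x)"
  using sp_const_mult[of x "-1"] by simp

lemma sp_diff: "strictly_proper x \<Longrightarrow> strictly_proper y \<Longrightarrow> strictly_proper (x - y)"
  using sp_add[of x "-y"] sp_uminus by simp

lemma sp_sum: "(\<And>i. i \<in> A \<Longrightarrow> strictly_proper (f i)) \<Longrightarrow> strictly_proper (sum f A)"
  by (induction A rule: infinite_finite_induct) (auto intro: sp_add)

lemma sp_prod: "finite A \<Longrightarrow> A \<noteq> {} \<Longrightarrow> (\<And>i. i \<in> A \<Longrightarrow> strictly_proper (f i)) \<Longrightarrow> strictly_proper (prod f A)"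
  by (induction A rule: finite_ne_induct) (auto intro: sp_mult)

lemma sp_to_fract: "strictly_proper (to_fract p) \<longleftrightarrow> p = 0"
  by (simp add: to_fract_def sp_Fract)

lemma sp_decomp: "\<exists>p s. x = to_fract p + s \<and> strictly_proper s"
proof -
  obtain a b where x: "x = Fract a b" "b \<noteq> (0::real poly)" by (cases x)
  have "x = to_fract (a div b) + Fract (a mod b) b"
    using x by (simp add: to_fract_def eq_fract algebra_simps)
  moreover have "strictly_proper (Fract (a mod b) b)"
    using x by (simp add: sp_Fract) (metis degree_mod_less)
  ultimately show ?thesis by blast
qed

lemma sp_poly_unique:
  assumes "to_fract p + s = to_fract p' + s'" "strictly_proper s" "strictly_proper s'"
  shows "p = p'" "s = s'"
proof -
  have "to_fract (p - p') = s' - s" using assms(1) by (simp add: algebra_simps)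
  moreover have "strictly_proper (s' - s)" using sp_diff assms by blast
  ultimately have "strictly_proper (to_fract (p - p'))" by simp
  then have "p - p' = 0" by (simp only: sp_to_fract)
  then show "p = p'" by simp
  then show "s = s'" using assms(1) by simp
qed




definition vm :: "'a::comm_ring_1 vec \<Rightarrow> 'a mat \<Rightarrow> 'a vec" where
  "vm v A = transpose_mat A *\<^sub>v v"

lemma vm_carrier[simp]: "A \<in> carrier_mat n m \<Longrightarrow> vm v A \<in> carrier_vec m"
  unfolding vm_def carrier_vec_def by auto

lemma vm_dim[simp]: "dim_vec (vm v A) = dim_col A"
  unfolding vm_def by auto

lemma vm_index:
  assumes "A \<in> carrier_mat n m" "v \<in> carrier_vec n" "j < m"
  shows "vm v A $ j = (\<Sum>i = 0..<n. A $$ (i,j) * v $ i)"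
  using assms unfolding vm_def by (auto simp: scalar_prod_def)

lemma vm_assoc:
  assumes "v \<in> carrier_vec n" "A \<in> carrier_mat n m" "B \<in> carrier_mat m k"
  shows "vm (vm v A) B = vm v (A * B)"
  unfolding vm_def using assms
  by (simp add: transpose_mult assoc_mult_mat_vec[of "transpose_mat B" k m "transpose_mat A" n])

lemma vm_one: "v \<in> carrier_vec n \<Longrightarrow> vm v (1\<^sub>m n) = v"
  unfolding vm_def by (simp add: transpose_one)

lemma vm_add:
  assumes "v \<in> carrier_vec n" "u \<in> carrier_vec n" "A \<in> carrier_mat n m"
  shows "vm (v + u) A = vm v A + vm u A"
  unfolding vm_def using assms by (simp add: mult_add_distrib_mat_vec[of _ m n])

lemma vm_smult:
  assumes "v \<in> carrier_vec n" "A \<in> carrier_mat n m"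
  shows "vm (a \<cdot>\<^sub>v v) A = a \<cdot>\<^sub>v vm v A"
  using assms by (intro eq_vecI) (auto simp: vm_index sum_distrib_left algebra_simps)

lemma vm_zero:
  assumes "A \<in> carrier_mat n m"
  shows "vm (0\<^sub>v n) A = 0\<^sub>v m"
  using assms by (intro eq_vecI) (auto simp: vm_index)

lemma vm_lift:
  assumes "v \<in> carrier_vec n" "A \<in> carrier_mat n m"
  shows "lift_vec (vm v A) = vm (lift_vec v) (lift_mat A)"
  unfolding vm_def lift_vec_eq lift_mat_eq using assms
  by (simp add: tf.mult_mat_vec_hom[of _ m n] map_mat_transpose)

lemma lift_vec_dim[simp]: "dim_vec (lift_vec v) = dim_vec v"
  unfolding lift_vec_def by (rule index_map_vec(2))

lemma lift_vec_carrier[simp]: "lift_vec v \<in> carrier_vec n \<longleftrightarrow> v \<in> carrier_vec n"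
  unfolding carrier_vec_def by (simp only: mem_Collect_eq lift_vec_dim)

lemma lift_vec_index[simp]: "i < dim_vec v \<Longrightarrow> lift_vec v $ i = to_fract (v $ i)"
  by (simp add: lift_vec_eq)

lemma lift_mat_carrier[simp]: "lift_mat A \<in> carrier_mat n m \<longleftrightarrow> A \<in> carrier_mat n m"
  unfolding carrier_mat_def lift_mat_def by simp

lemma lift_vec_inj: "lift_vec u = lift_vec v \<Longrightarrow> u = v"
  unfolding lift_vec_eq by (metis tf.vec_hom_inj)

lemma lift_vec_add: "u \<in> carrier_vec n \<Longrightarrow> v \<in> carrier_vec n \<Longrightarrow> lift_vec (u + v) = lift_vec u + lift_vec v"
  by (intro eq_vecI) auto

lemma lift_vec_minus: "u \<in> carrier_vec n \<Longrightarrow> v \<in> carrier_vec n \<Longrightarrow> lift_vec (u - v) = lift_vec u - lift_vec v"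
  by (intro eq_vecI) auto

lemma rinv_carrier: "R \<in> carrier_mat w w \<Longrightarrow> rat_inverse R \<in> carrier_mat w w"
  unfolding rat_inverse_def using adj_mat(1)[of "lift_mat R" w] by simp

lemma det_lift: "det (lift_mat R) = to_fract (det R)"
  unfolding lift_mat_eq by simp

lemma rinv_left:
  assumes R: "R \<in> carrier_mat w w" and d: "det R \<noteq> 0"
  shows "rat_inverse R * lift_mat R = 1\<^sub>m w"
proof -
  let ?L = "lift_mat R"
  have L: "?L \<in> carrier_mat w w" using R by simp
  have d': "det ?L \<noteq> 0" using d by (simp add: det_lift)
  have "rat_inverse R * ?L = inverse (det ?L) \<cdot>\<^sub>m (adj_mat ?L * ?L)"
    unfolding rat_inverse_def using adj_mat(1)[OF L] L by (simp add: mult_smult_assoc_mat)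
  also have "\<dots> = 1\<^sub>m w" unfolding adj_mat(3)[OF L]
    using d' by (intro eq_matI) auto
  finally show ?thesis .
qed

lemma rinv_right:
  assumes R: "R \<in> carrier_mat w w" and d: "det R \<noteq> 0"
  shows "lift_mat R * rat_inverse R = 1\<^sub>m w"
proof -
  let ?L = "lift_mat R"
  have L: "?L \<in> carrier_mat w w" using R by simp
  have d': "det ?L \<noteq> 0" using d by (simp add: det_lift)
  have "?L * rat_inverse R = inverse (det ?L) \<cdot>\<^sub>m (?L * adj_mat ?L)"
    unfolding rat_inverse_def using adj_mat(1)[OF L] L by (simp add: mult_smult_distrib)
  also have "\<dots> = 1\<^sub>m w" unfolding adj_mat(2)[OF L]
    using d' by (intro eq_matI) auto
  finally show ?thesis .
qed




lemma smult_as_mult: "smult c p = [:c:] * p"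
  by simp

lemma vm_minus:
  assumes "v \<in> carrier_vec n" "u \<in> carrier_vec n" "A \<in> carrier_mat n m"
  shows "vm (v - u) A = vm v A - vm u A"
  using assms by (intro eq_vecI) (auto simp: vm_index sum_subtractf algebra_simps)

definition rowmod :: "real poly mat \<Rightarrow> real poly vec set" where
  "rowmod R = {vm h R | h. h \<in> carrier_vec (dim_row R)}"

lemma ss_iff:
  assumes "R \<in> carrier_mat w w"
  shows "f \<in> state_space R \<longleftrightarrow> f \<in> carrier_vec w \<and> strictly_proper_vec (vm (lift_vec f) (rat_inverse R))"
  using assms unfolding state_space_def vm_def carrier_vec_def by auto

lemma spv_iff: "strictly_proper_vec v \<longleftrightarrow> (\<forall>j<dim_vec v. strictly_proper (v $ j))"
  by (simp add: strictly_proper_vec_def)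

lemma to_fract_smult: "to_fract (smult c p) = to_fract [:c:] * to_fract p"
  by (simp only: smult_as_mult to_fract_mult)

lemma lift_vec_smult: "lift_vec (map_vec (smult c) f) = to_fract [:c:] \<cdot>\<^sub>v lift_vec f"
proof (rule eq_vecI)
  fix i assume "i < dim_vec (to_fract [:c:] \<cdot>\<^sub>v lift_vec f)"
  then have i: "i < dim_vec f" by simp
  then show "lift_vec (map_vec (smult c) f) $ i = (to_fract [:c:] \<cdot>\<^sub>v lift_vec f) $ i"
    by (simp del: to_fract_mult add: to_fract_smult)
qed simp

lemma lift_vec_zero: "lift_vec (0\<^sub>v n) = 0\<^sub>v n"
  by (intro eq_vecI) auto

context
  fixes R :: "real poly mat" and w :: nat
  assumes R: "R \<in> carrier_mat w w" and dR: "det R \<noteq> 0"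
begin

private abbreviation "Ri \<equiv> rat_inverse R"
private abbreviation "L \<equiv> lift_mat R"

private lemma Ri: "Ri \<in> carrier_mat w w" using rinv_carrier[OF R] .
private lemma L: "L \<in> carrier_mat w w" using R by simp

lemma ss_zero: "0\<^sub>v w \<in> state_space R"
  using Ri by (auto simp: ss_iff[OF R] spv_iff vm_zero lift_vec_zero)

lemma ss_add: "f \<in> state_space R \<Longrightarrow> g \<in> state_space R \<Longrightarrow> f + g \<in> state_space R"
  unfolding ss_iff[OF R] using Ri
  by (auto simp: lift_vec_add[of _ w] vm_add[of _ w _ _ w] spv_iff intro!: sp_add)

lemma ss_smult: "f \<in> state_space R \<Longrightarrow> map_vec (smult c) f \<in> state_space R"
  unfolding ss_iff[OF R] using Ri
  by (auto simp: lift_vec_smult vm_smult[of _ w _ w] spv_iff intro!: sp_const_mult)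

lemma ss_rowmod:
  assumes g: "g \<in> state_space R" and h: "h \<in> carrier_vec w" and e: "g = vm h R"
  shows "h = 0\<^sub>v w"
proof -
  have "vm (lift_vec g) Ri = vm (vm (lift_vec h) L) Ri"
    using e vm_lift[OF h R] by simp
  also have "\<dots> = lift_vec h" using vm_assoc[of _ w L w Ri w] h L Ri
    by (simp add: rinv_right[OF R dR] vm_one)
  finally have "strictly_proper_vec (lift_vec h)" using g ss_iff[OF R] by simp
  then show ?thesis using h by (intro eq_vecI) (auto simp: spv_iff sp_to_fract)
qed

private definition modP where "modP f g \<longleftrightarrow> (dim_vec g = dim_vec f \<and>
     (\<exists>s n. strictly_proper_vec s \<and> dim_vec s = dim_vec f \<and> dim_vec n = dim_vec f \<and>
        transpose_mat (rat_inverse R) *\<^sub>v lift_vec f = s + lift_vec n \<and>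
        lift_vec g = transpose_mat (lift_mat R) *\<^sub>v s))"

private lemma mod_row_modP: "mod_row f R = (THE g. modP f g)"
  unfolding mod_row_def modP_def ..

private lemma modP_unique:
  assumes f: "f \<in> carrier_vec w" and P1: "modP f g" and P2: "modP f g'"
  shows "g = g'"
proof -
  obtain s n where s: "strictly_proper_vec s" "dim_vec s = w" "dim_vec n = w"
    "vm (lift_vec f) Ri = s + lift_vec n" "lift_vec g = vm s L"
    using P1 f unfolding modP_def vm_def by auto
  obtain s' n' where s': "strictly_proper_vec s'" "dim_vec s' = w" "dim_vec n' = w"
    "vm (lift_vec f) Ri = s' + lift_vec n'" "lift_vec g' = vm s' L"
    using P2 f unfolding modP_def vm_def by auto
  have "s = s'"
  proof (rule eq_vecI)
    fix j assume j: "j < dim_vec s'"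
    have "(s + lift_vec n) $ j = (s' + lift_vec n') $ j" using s s' by simp
    then have "to_fract (n $ j) + s $ j = to_fract (n' $ j) + s' $ j"
      using j s s' by (simp add: add.commute)
    then show "s $ j = s' $ j" using sp_poly_unique(2) s(1) s'(1) j s s' by (auto simp: spv_iff)
  qed (use s s' in simp)
  then have "lift_vec g = lift_vec g'" using s s' by simp
  then show ?thesis by (rule lift_vec_inj)
qed

private lemma modP_intro:
  assumes g: "g \<in> state_space R" and h: "h \<in> carrier_vec w"
  shows "modP (g + vm h R) g"
proof -
  have gc: "g \<in> carrier_vec w" using g ss_iff[OF R] by simp
  define s where "s = vm (lift_vec g) Ri"
  have sp: "strictly_proper_vec s" using g ss_iff[OF R] s_def by simp
  have sc: "s \<in> carrier_vec w" using s_def Ri by simp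
  have "vm (lift_vec (g + vm h R)) Ri = vm (lift_vec g + vm (lift_vec h) L) Ri"
    using lift_vec_add[OF gc vm_carrier[OF R]] vm_lift[OF h R] by simp
  also have "\<dots> = s + vm (vm (lift_vec h) L) Ri"
    using vm_add[of "lift_vec g" w "vm (lift_vec h) L" Ri w] gc h L Ri s_def by simp
  also have "vm (vm (lift_vec h) L) Ri = lift_vec h"
    using vm_assoc[of _ w L w Ri w] h L Ri by (simp add: rinv_right[OF R dR] vm_one)
  finally have e1: "vm (lift_vec (g + vm h R)) Ri = s + lift_vec h" .
  have e2: "lift_vec g = vm s L"
    unfolding s_def using vm_assoc[of _ w Ri w L w] gc L Ri by (simp add: rinv_left[OF R dR] vm_one)
  show ?thesis unfolding modP_def
    using e1 e2 sp sc gc h R by (intro conjI exI[of _ s] exI[of _ h]) (auto simp: vm_def)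
qed

lemma mod_row_eq:
  assumes g: "g \<in> state_space R" and h: "h \<in> carrier_vec w"
  shows "mod_row (g + vm h R) R = g"
proof -
  have gc: "g \<in> carrier_vec w" using g ss_iff[OF R] by simp
  have fc: "g + vm h R \<in> carrier_vec w" using gc R by simp
  show ?thesis unfolding mod_row_modP
    using modP_intro[OF g h] modP_unique[OF fc] by blast
qed

lemma mod_row_exists:
  assumes f: "f \<in> carrier_vec w"
  shows "\<exists>g h. g \<in> state_space R \<and> h \<in> carrier_vec w \<and> f = g + vm h R"
proof -
  define v where "v = vm (lift_vec f) Ri"
  have vc: "v \<in> carrier_vec w" using v_def Ri by simp
  have "\<forall>j. \<exists>p s. v $ j = to_fract p + s \<and> strictly_proper s" using sp_decomp by blast
  then obtain P S where PS: "\<And>j. v $ j = to_fract (P j) + S j \<and> strictly_proper (S j)" by metis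
  define n where "n = vec w P"
  define sv where "sv = vec w S"
  have nc: "n \<in> carrier_vec w" and svc: "sv \<in> carrier_vec w" unfolding n_def sv_def by auto
  have vs: "v = sv + lift_vec n" using PS vc unfolding n_def sv_def by (intro eq_vecI) (auto simp: add.commute)
  define g where "g = f - vm n R"
  have gc: "g \<in> carrier_vec w" using g_def f R by simp
  have "lift_vec g = lift_vec f - vm (lift_vec n) L"
    unfolding g_def using lift_vec_minus[OF f vm_carrier[OF R]] vm_lift[OF nc R] by simp
  also have "lift_vec f = vm v L"
    unfolding v_def using vm_assoc[of _ w Ri w L w] f L Ri by (simp add: rinv_left[OF R dR] vm_one)
  also have "vm v L = vm sv L + vm (lift_vec n) L" unfolding vs using vm_add[of sv w "lift_vec n" L w] svc nc L by simp
  finally have lg: "lift_vec g = vm sv L" using svc nc L by auto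
  have "vm (lift_vec g) Ri = sv"
    unfolding lg using vm_assoc[of _ w L w Ri w] svc L Ri by (simp add: rinv_right[OF R dR] vm_one)
  then have "g \<in> state_space R" using gc PS svc unfolding ss_iff[OF R] by (auto simp: spv_iff sv_def)
  moreover have "f = g + vm n R" unfolding g_def using f nc R by auto
  ultimately show ?thesis using nc by blast
qed

lemma mod_row_props:
  assumes f: "f \<in> carrier_vec w"
  shows "mod_row f R \<in> state_space R" "\<exists>h \<in> carrier_vec w. f = mod_row f R + vm h R"
  using mod_row_exists[OF f] mod_row_eq by auto

lemma mod_row_ss: "g \<in> state_space R \<Longrightarrow> mod_row g R = g"
  using mod_row_eq[of g "0\<^sub>v w"] vm_zero[OF R] ss_iff[OF R] by auto

end



lemma ss_incl:
  assumes R1: "R1 \<in> carrier_mat w w" and d1: "det R1 \<noteq> 0"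
    and R2: "R2 \<in> carrier_mat w w" and d2: "det R2 \<noteq> 0"
    and sp: "strictly_proper_mat (lift_mat R2 * rat_inverse R1)"
  shows "state_space R2 \<subseteq> state_space R1"
proof
  fix g assume g: "g \<in> state_space R2"
  have gc: "g \<in> carrier_vec w" using g ss_iff[OF R2] by simp
  define s where "s = vm (lift_vec g) (rat_inverse R2)"
  have sps: "strictly_proper_vec s" using g ss_iff[OF R2] s_def by simp
  define M where "M = lift_mat R2 * rat_inverse R1"
  have Mc: "M \<in> carrier_mat w w" unfolding M_def using R2 rinv_carrier[OF R1] by simp
  have Ri1: "rat_inverse R1 \<in> carrier_mat w w" using rinv_carrier[OF R1] .
  have Ri2: "rat_inverse R2 \<in> carrier_mat w w" using rinv_carrier[OF R2] .
  have L2: "lift_mat R2 \<in> carrier_mat w w" using R2 by simp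
  have sc: "s \<in> carrier_vec w" unfolding s_def using Ri2 by simp
  have "rat_inverse R2 * M = rat_inverse R1"
    unfolding M_def using Ri1 Ri2 L2
    by (simp add: assoc_mult_mat[symmetric, of _ w w _ w _ w] rinv_left[OF R2 d2])
  then have "vm (lift_vec g) (rat_inverse R1) = vm s M"
    unfolding s_def using vm_assoc[of "lift_vec g" w "rat_inverse R2" w M w] gc Ri2 Mc by simp
  moreover have "strictly_proper_vec (vm s M)"
    unfolding spv_iff
  proof (intro allI impI)
    fix j assume "j < dim_vec (vm s M)"
    then have j: "j < w" using Mc by simp
    show "strictly_proper (vm s M $ j)"
      unfolding vm_index[OF Mc sc j]
      using sp sps Mc sc j unfolding M_def[symmetric] strictly_proper_mat_def spv_iff
      by (auto intro!: sp_sum sp_mult)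
  qed
  ultimately show "g \<in> state_space R1" using gc ss_iff[OF R1] by simp
qed

lemma det_sp:
  assumes M: "M \<in> carrier_mat w w" and w: "0 < w" and sp: "strictly_proper_mat M"
  shows "strictly_proper (det M)"
  unfolding det_def'[OF M]
proof (rule sp_sum)
  fix p assume "p \<in> {p. p permutes {0..<w}}"
  then have p: "p permutes {0..<w}" by simp
  have pr: "strictly_proper (\<Prod>i = 0..<w. M $$ (i, p i))"
  proof (rule sp_prod)
    fix i assume i: "i \<in> {0..<w}"
    then have "p i < w" using permutes_in_image[OF p] by simp
    then show "strictly_proper (M $$ (i, p i))" using sp M i unfolding strictly_proper_mat_def by auto
  qed (use w in auto)
  show "strictly_proper (signof p * (\<Prod>i = 0..<w. M $$ (i, p i)))"
    by (cases rule: sign_cases[of p]) (use pr sp_uminus in auto)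
qed

lemma deg_less:
  assumes R1: "R1 \<in> carrier_mat w w" and d1: "det R1 \<noteq> 0"
    and R2: "R2 \<in> carrier_mat w w" and d2: "det R2 \<noteq> 0" and w: "0 < w"
    and sp: "strictly_proper_mat (lift_mat R2 * rat_inverse R1)"
  shows "degree (det R2) < degree (det R1)"
proof -
  define M where "M = lift_mat R2 * rat_inverse R1"
  have Ri1: "rat_inverse R1 \<in> carrier_mat w w" using rinv_carrier[OF R1] .
  have L1: "lift_mat R1 \<in> carrier_mat w w" using R1 by simp
  have L2: "lift_mat R2 \<in> carrier_mat w w" using R2 by simp
  have Mc: "M \<in> carrier_mat w w" unfolding M_def using L2 Ri1 by simp
  have "M * lift_mat R1 = lift_mat R2"
    unfolding M_def using Ri1 L1 L2
    by (simp add: assoc_mult_mat[of _ w w _ w _ w] rinv_left[OF R1 d1])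
  then have "det M * det (lift_mat R1) = det (lift_mat R2)"
    using det_mult[OF Mc L1] by simp
  then have "det M = to_fract (det R2) / to_fract (det R1)"
    using d1 by (simp add: det_lift eq_divide_eq)
  then have "det M = Fract (det R2) (det R1)" by (simp add: Fract_conv_to_fract)
  moreover have "strictly_proper (det M)" using det_sp[OF Mc w] sp M_def by simp
  ultimately show ?thesis using sp_Fract[OF d1] d2 by simp
qed




lemma rowmod_mult:
  assumes A: "A \<in> carrier_mat n m" and E: "E \<in> carrier_mat n n"
  shows "rowmod (E * A) \<subseteq> rowmod A"
proof
  fix x assume "x \<in> rowmod (E * A)"
  then obtain h where h: "h \<in> carrier_vec n" "x = vm h (E * A)" unfolding rowmod_def using E by auto
  then have "x = vm (vm h E) A" using vm_assoc[OF h(1) E A] by simp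
  moreover have "vm h E \<in> carrier_vec n" using E by simp
  ultimately show "x \<in> rowmod A" unfolding rowmod_def using A by auto
qed

lemma addrow_inv:
  assumes A: "(A :: real poly mat) \<in> carrier_mat n m" and kl: "k \<noteq> l" "k < n" "l < n"
  shows "addrow (-a) k l (addrow a k l A) = A"
  using assms by (intro eq_matI) (auto simp: algebra_simps)

lemma swaprows_inv:
  assumes A: "A \<in> carrier_mat n m" and "k < n" "l < n"
  shows "swaprows k l (swaprows k l A) = A"
  using assms by (intro eq_matI) auto

lemma swaprows_same:
  assumes A: "A \<in> carrier_mat n m"
  shows "swaprows k k A = A"
  using assms by (intro eq_matI) auto

lemma rowmod_addrow:
  assumes A: "A \<in> carrier_mat n n" and kl: "k \<noteq> l" "k < n" "l < n"
  shows "rowmod (addrow a k l A) = rowmod A"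
proof
  show "rowmod (addrow a k l A) \<subseteq> rowmod A"
    using rowmod_mult[OF A, of "addrow_mat n a k l"] addrow_mat[OF A kl(3)] by simp
  have A': "addrow a k l A \<in> carrier_mat n n" using A by simp
  show "rowmod A \<subseteq> rowmod (addrow a k l A)"
    using rowmod_mult[OF A', of "addrow_mat n (-a) k l"] addrow_mat[OF A' kl(3), of "-a" k]
      addrow_inv[OF A kl, of a] by simp
qed

lemma rowmod_swaprows:
  assumes A: "A \<in> carrier_mat n n" and kl: "k < n" "l < n"
  shows "rowmod (swaprows k l A) = rowmod A"
proof
  show "rowmod (swaprows k l A) \<subseteq> rowmod A"
    using rowmod_mult[OF A, of "swaprows_mat n k l"] swaprows_mat[OF A kl] by simp
  have A': "swaprows k l A \<in> carrier_mat n n" using A by simp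
  show "rowmod A \<subseteq> rowmod (swaprows k l A)"
    using rowmod_mult[OF A', of "swaprows_mat n k l"] swaprows_mat[OF A' kl]
      swaprows_inv[OF A kl] by simp
qed

definition req :: "nat \<Rightarrow> real poly mat \<Rightarrow> real poly mat \<Rightarrow> bool" where
  "req n A B \<longleftrightarrow> B \<in> carrier_mat n n \<and> rowmod B = rowmod A \<and> (det B = det A \<or> det B = - det A)"

lemma req_refl: "A \<in> carrier_mat n n \<Longrightarrow> req n A A" unfolding req_def by auto

lemma req_trans: "req n A B \<Longrightarrow> req n B C \<Longrightarrow> req n A C" unfolding req_def by auto

lemma req_addrow:
  assumes A: "A \<in> carrier_mat n n" and kl: "k \<noteq> l" "k < n" "l < n"
  shows "req n A (addrow a k l A)"
  unfolding req_def using rowmod_addrow[OF assms] det_addrow[OF kl(3) kl(1) A] A by simp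

lemma req_swaprows:
  assumes A: "A \<in> carrier_mat n n" and kl: "k < n" "l < n"
  shows "req n A (swaprows k l A)"
proof (cases "k = l")
  case True then show ?thesis using swaprows_same[OF A] req_refl[OF A] by simp
next
  case False
  then show ?thesis
    unfolding req_def using rowmod_swaprows[OF A kl] det_swaprows[OF kl False A] A by simp
qed

definition Zc :: "nat \<Rightarrow> nat \<Rightarrow> real poly mat \<Rightarrow> bool" where
  "Zc n k A \<longleftrightarrow> (\<forall>i j. j < k \<longrightarrow> j < i \<longrightarrow> i < n \<longrightarrow> A $$ (i,j) = 0)"

lemma clear_rows:
  assumes A: "A \<in> carrier_mat n n" and k: "k < n"
  shows "m \<le> n \<Longrightarrow> \<exists>B. req n A B \<and> (\<forall>i<n. \<forall>j<n. B $$ (i,j) =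
     (if k < i \<and> i < m then A $$ (i,j) - (A $$ (i,k) div A $$ (k,k)) * A $$ (k,j) else A $$ (i,j)))"
proof (induction m)
  case 0
  then show ?case using req_refl[OF A] by auto
next
  case (Suc m)
  then obtain B where B: "req n A B" and Be: "\<forall>i<n. \<forall>j<n. B $$ (i,j) =
     (if k < i \<and> i < m then A $$ (i,j) - (A $$ (i,k) div A $$ (k,k)) * A $$ (k,j) else A $$ (i,j))"
    by auto
  have Bc: "B \<in> carrier_mat n n" using B req_def by auto
  show ?case
  proof (cases "k < m")
    case True
    have m: "m < n" using Suc by simp
    define B' where "B' = addrow (- (A $$ (m,k) div A $$ (k,k))) m k B"
    have "req n B B'" unfolding B'_def using req_addrow[OF Bc _ m k] True by simp
    moreover have "\<forall>i<n. \<forall>j<n. B' $$ (i,j) =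
     (if k < i \<and> i < Suc m then A $$ (i,j) - (A $$ (i,k) div A $$ (k,k)) * A $$ (k,j) else A $$ (i,j))"
      unfolding B'_def using Be Bc True m by auto
    ultimately show ?thesis using req_trans[OF B] by blast
  next
    case False
    then show ?thesis using B Be by (intro exI[of _ B]) auto
  qed
qed

lemma clear_col_aux:
  assumes k: "k < n"
  shows "\<forall>A. A \<in> carrier_mat n n \<longrightarrow> Zc n k A \<longrightarrow>
    (\<exists>i. k \<le> i \<and> i < n \<and> A $$ (i,k) \<noteq> 0 \<and> degree (A $$ (i,k)) \<le> d) \<longrightarrow>
    (\<exists>B. req n A B \<and> Zc n (Suc k) B)"
proof (induction d rule: less_induct)
  case (less d)
  show ?case
  proof (intro allI impI)
    fix A assume A: "A \<in> carrier_mat n n" and Z: "Zc n k A"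
      and ex: "\<exists>i. k \<le> i \<and> i < n \<and> A $$ (i,k) \<noteq> 0 \<and> degree (A $$ (i,k)) \<le> d"
    then obtain i0 where i0: "k \<le> i0" "i0 < n" "A $$ (i0,k) \<noteq> 0" "degree (A $$ (i0,k)) \<le> d" by blast
    obtain p where p: "k \<le> p \<and> p < n \<and> A $$ (p,k) \<noteq> 0"
      and pmin: "\<And>i. k \<le> i \<and> i < n \<and> A $$ (i,k) \<noteq> 0 \<Longrightarrow> degree (A $$ (p,k)) \<le> degree (A $$ (i,k))"
      using ex_has_least_nat[of "\<lambda>i. k \<le> i \<and> i < n \<and> A $$ (i,k) \<noteq> 0" i0 "\<lambda>i. degree (A $$ (i,k))"] i0
      by blast
    define A1 where "A1 = swaprows k p A"
    have A1c: "A1 \<in> carrier_mat n n" unfolding A1_def using A by simp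
    have r1: "req n A A1" unfolding A1_def using req_swaprows[OF A k] p by simp
    have A1e: "\<And>i j. i < n \<Longrightarrow> j < n \<Longrightarrow> A1 $$ (i,j) = (if k = i then A $$ (p,j) else if p = i then A $$ (k,j) else A $$ (i,j))"
      unfolding A1_def using A by simp
    have Z1: "Zc n k A1" using Z p A1e k unfolding Zc_def by auto
    have piv: "A1 $$ (k,k) \<noteq> 0" using A1e p k by simp
    have pivdeg: "degree (A1 $$ (k,k)) \<le> d" using A1e p k pmin[of i0] i0 by simp
    obtain A2 where r2: "req n A1 A2" and A2e: "\<forall>i<n. \<forall>j<n. A2 $$ (i,j) =
     (if k < i \<and> i < n then A1 $$ (i,j) - (A1 $$ (i,k) div A1 $$ (k,k)) * A1 $$ (k,j) else A1 $$ (i,j))"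
      using clear_rows[OF A1c k, of n] by auto
    have A2c: "A2 \<in> carrier_mat n n" using r2 req_def by auto
    have Z2: "Zc n k A2" unfolding Zc_def
    proof (intro allI impI)
      fix i j assume ij: "j < k" "j < i" "i < n"
      then have "A1 $$ (i,j) = 0" "A1 $$ (k,j) = 0" using Z1 k unfolding Zc_def by auto
      then show "A2 $$ (i,j) = 0" using A2e ij k by auto
    qed
    have A2k: "\<And>i. k < i \<Longrightarrow> i < n \<Longrightarrow> A2 $$ (i,k) = A1 $$ (i,k) mod A1 $$ (k,k)"
      using A2e k by (simp add: minus_div_mult_eq_mod)
    show "\<exists>B. req n A B \<and> Zc n (Suc k) B"
    proof (cases "\<exists>i. k < i \<and> i < n \<and> A2 $$ (i,k) \<noteq> 0")
      case False
      then have "Zc n (Suc k) A2" using Z2 unfolding Zc_def by (metis less_Suc_eq)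
      then show ?thesis using req_trans[OF r1 r2] by blast
    next
      case True
      then obtain i where i: "k < i" "i < n" "A2 $$ (i,k) \<noteq> 0" by blast
      have "degree (A2 $$ (i,k)) < degree (A1 $$ (k,k))"
        using A2k[OF i(1,2)] i(3) piv by (metis degree_mod_less)
      then have dl: "degree (A2 $$ (i,k)) < d" using pivdeg by simp
      have "\<exists>B. req n A2 B \<and> Zc n (Suc k) B"
        using less.IH[OF dl] A2c Z2 i by (meson less_imp_le order_refl)
      then show ?thesis using req_trans[OF req_trans[OF r1 r2]] by blast
    qed
  qed
qed

lemma clear_col:
  assumes A: "A \<in> carrier_mat n n" and k: "k < n" and Z: "Zc n k A"
  shows "\<exists>B. req n A B \<and> Zc n (Suc k) B"
proof (cases "\<exists>i. k \<le> i \<and> i < n \<and> A $$ (i,k) \<noteq> 0")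
  case True
  then obtain i where "k \<le> i \<and> i < n \<and> A $$ (i,k) \<noteq> 0" by blast
  then show ?thesis using clear_col_aux[OF k, of "degree (A $$ (i,k))"] A Z by blast
next
  case False
  then have "Zc n (Suc k) A" using Z unfolding Zc_def by (metis less_Suc_eq less_imp_le)
  then show ?thesis using req_refl[OF A] by blast
qed

lemma triangularize:
  assumes A: "A \<in> carrier_mat n n"
  shows "\<exists>T. req n A T \<and> upper_triangular T"
proof -
  have "k \<le> n \<Longrightarrow> \<exists>B. req n A B \<and> Zc n k B" for k
  proof (induction k)
    case 0 then show ?case using req_refl[OF A] unfolding Zc_def by auto
  next
    case (Suc k)
    then obtain B where B: "req n A B" "Zc n k B" by auto
    have "B \<in> carrier_mat n n" using B req_def by auto
    then show ?case using clear_col[of B n k] Suc B req_trans by (meson Suc_le_lessD)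
  qed
  then obtain T where T: "req n A T" "Zc n n T" by blast
  have "T \<in> carrier_mat n n" using T req_def by auto
  then have "upper_triangular T" using T(2) unfolding Zc_def upper_triangular_def
    by (metis carrier_matD(1) less_trans)
  then show ?thesis using T by blast
qed




definition Sred :: "real poly mat \<Rightarrow> real poly vec \<Rightarrow> bool" where
  "Sred T f \<longleftrightarrow> (\<forall>j<dim_vec f. f $ j = 0 \<or> degree (f $ j) < degree (T $$ (j,j)))"

lemma sum_delta_mult: "(j::nat) < n \<Longrightarrow> (\<Sum>i = 0..<n. (a i :: 'a::comm_ring_1) * (if i = j then 1 else 0)) = a j"
proof -
  assume j: "j < n"
  have "(\<Sum>i = 0..<n. a i * (if i = j then 1 else 0)) = (\<Sum>i = 0..<n. (if i = j then a i else 0))"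
    by (rule sum.cong) auto
  also have "\<dots> = a j" using j by (subst sum.delta) auto
  finally show ?thesis .
qed

context
  fixes T :: "real poly mat" and n :: nat
  assumes T: "T \<in> carrier_mat n n" and ut: "upper_triangular T" and dg: "\<forall>j<n. T $$ (j,j) \<noteq> 0"
begin

lemma ut0: "i < n \<Longrightarrow> j < i \<Longrightarrow> T $$ (i,j) = 0"
  using ut T unfolding upper_triangular_def by auto

lemma vm_unit:
  assumes h: "h \<in> carrier_vec n" and m: "m < n" and j: "j < n"
  shows "vm (h + q \<cdot>\<^sub>v unit_vec n m) T $ j = vm h T $ j + q * T $$ (m,j)"
proof -
  have u: "unit_vec n m \<in> carrier_vec n" by simp
  have "vm (h + q \<cdot>\<^sub>v unit_vec n m) T = vm h T + q \<cdot>\<^sub>v vm (unit_vec n m) T"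
    using vm_add[of h n "q \<cdot>\<^sub>v unit_vec n m" T n] vm_smult[OF u T] h T by simp
  moreover have "vm (unit_vec n m) T $ j = T $$ (m,j)"
    using vm_index[OF T u j] m by (simp add: sum_delta_mult)
  ultimately show ?thesis using j T by simp
qed

lemma red_exists:
  assumes f: "f \<in> carrier_vec n"
  shows "\<exists>h \<in> carrier_vec n. Sred T (f - vm h T)"
proof -
  have "m \<le> n \<Longrightarrow> \<exists>h \<in> carrier_vec n. \<forall>j<m. (f - vm h T) $ j = 0 \<or> degree ((f - vm h T) $ j) < degree (T $$ (j,j))" for m
  proof (induction m)
    case 0 then show ?case by (intro bexI[of _ "0\<^sub>v n"]) auto
  next
    case (Suc m)
    then obtain h where h: "h \<in> carrier_vec n" and
      hj: "\<forall>j<m. (f - vm h T) $ j = 0 \<or> degree ((f - vm h T) $ j) < degree (T $$ (j,j))" by auto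
    have m: "m < n" using Suc by simp
    define r where "r = f - vm h T"
    define q where "q = r $ m div T $$ (m,m)"
    define h' where "h' = h + q \<cdot>\<^sub>v unit_vec n m"
    have h'c: "h' \<in> carrier_vec n" unfolding h'_def using h by simp
    have e: "(f - vm h' T) $ j = r $ j - q * T $$ (m,j)" if "j < n" for j
      unfolding h'_def r_def using vm_unit[OF h m that] that f T by simp
    have "\<forall>j<Suc m. (f - vm h' T) $ j = 0 \<or> degree ((f - vm h' T) $ j) < degree (T $$ (j,j))"
    proof (intro allI impI)
      fix j assume j: "j < Suc m"
      show "(f - vm h' T) $ j = 0 \<or> degree ((f - vm h' T) $ j) < degree (T $$ (j,j))"
      proof (cases "j < m")
        case True
        then have "(f - vm h' T) $ j = r $ j" using e[of j] m ut0[OF m True] by simp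
        then show ?thesis using hj True r_def by simp
      next
        case False
        then have jm: "j = m" using j by simp
        have "(f - vm h' T) $ j = r $ m mod T $$ (m,m)" using e[of j] m jm q_def
          by (simp add: minus_div_mult_eq_mod)
        then show ?thesis using jm dg m by (metis degree_mod_less)
      qed
    qed
    then show ?case using h'c by blast
  qed
  from this[of n] show ?thesis unfolding Sred_def using f T by auto
qed

lemma red_zero:
  assumes h: "h \<in> carrier_vec n" and S: "Sred T (vm h T)"
  shows "h = 0\<^sub>v n"
proof (rule ccontr)
  assume "h \<noteq> 0\<^sub>v n"
  then have "\<exists>j. j < n \<and> h $ j \<noteq> 0" using h by (metis eq_vecI carrier_vecD index_zero_vec(1,2))
  then obtain j where j: "j < n" "h $ j \<noteq> 0" and jmin: "\<forall>i<j. \<not> (i < n \<and> h $ i \<noteq> 0)"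
    using exists_least_iff[of "\<lambda>j. j < n \<and> h $ j \<noteq> 0"] by blast
  have "vm h T $ j = (\<Sum>i = 0..<n. T $$ (i,j) * h $ i)" using vm_index[OF T h j(1)] .
  also have "\<dots> = (\<Sum>i = 0..<n. (if i = j then T $$ (j,j) * h $ j else 0))"
  proof (rule sum.cong)
    fix i assume i: "i \<in> {0..<n}"
    show "T $$ (i,j) * h $ i = (if i = j then T $$ (j,j) * h $ j else 0)"
    proof (cases "i < j")
      case True then show ?thesis using jmin i by auto
    next
      case False
      then show ?thesis using ut0[of i j] i by auto
    qed
  qed simp
  also have "\<dots> = T $$ (j,j) * h $ j" using j by (simp add: sum.delta)
  finally have e: "vm h T $ j = T $$ (j,j) * h $ j" .
  have nz: "T $$ (j,j) * h $ j \<noteq> 0" using dg j by simp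
  have "degree (T $$ (j,j) * h $ j) \<ge> degree (T $$ (j,j))"
    using dg j by (simp add: degree_mult_eq)
  moreover have "degree (T $$ (j,j) * h $ j) < degree (T $$ (j,j))"
    using S e nz j T unfolding Sred_def by (metis vm_dim carrier_matD(2))
  ultimately show False by simp
qed

end

definition sc :: "real \<Rightarrow> (nat \<Rightarrow> real poly) \<Rightarrow> (nat \<Rightarrow> real poly)" where
  "sc c F = (\<lambda>i. smult c (F i))"

interpretation VS: vector_space sc
  by unfold_locales (auto simp: sc_def smult_add_right smult_add_left)

definition toF :: "real poly vec \<Rightarrow> nat \<Rightarrow> real poly" where
  "toF v = (\<lambda>i. if i < dim_vec v then v $ i else 0)"

lemma toF_add: "u \<in> carrier_vec n \<Longrightarrow> v \<in> carrier_vec n \<Longrightarrow> toF (u + v) = toF u + toF v"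
  unfolding toF_def by (auto simp: fun_eq_iff)

lemma smult_vec_eq: "[:c:] \<cdot>\<^sub>v v = map_vec (smult c) v"
  by (intro eq_vecI) auto

lemma toF_smult: "toF ([:c:] \<cdot>\<^sub>v v) = sc c (toF v)"
  unfolding toF_def sc_def by (auto simp: fun_eq_iff)

lemma toF_zero[simp]: "toF (0\<^sub>v n) = 0"
  unfolding toF_def by (auto simp: fun_eq_iff)

lemma toF_inj:
  assumes u: "u \<in> carrier_vec n" and v: "v \<in> carrier_vec n" and e: "toF u = toF v"
  shows "u = v"
proof (rule eq_vecI)
  fix i assume i: "i < dim_vec v"
  have "toF u i = toF v i" using e by simp
  then show "u $ i = v $ i" using i u v unfolding toF_def by (simp add: carrier_vecD)
qed (use u v in \<open>simp add: carrier_vecD\<close>)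

lemma vec_toF:
  assumes v: "v \<in> carrier_vec n"
  shows "vec n (toF v) = v"
proof (rule eq_vecI)
  fix i assume i: "i < dim_vec v"
  then have "i < n" using v by (simp add: carrier_vecD)
  then show "vec n (toF v) $ i = v $ i" using i unfolding toF_def by simp
qed (use v in \<open>simp add: carrier_vecD\<close>)

lemma toF_vec: "(\<forall>i\<ge>n. F i = 0) \<Longrightarrow> toF (vec n F) = F"
  unfolding toF_def by (auto simp: fun_eq_iff)

lemma toF_supp: "v \<in> carrier_vec n \<Longrightarrow> i \<ge> n \<Longrightarrow> toF v i = 0"
  unfolding toF_def by auto

definition modF :: "real poly mat \<Rightarrow> (nat \<Rightarrow> real poly) \<Rightarrow> (nat \<Rightarrow> real poly)" where
  "modF R F = toF (mod_row (vec (dim_row R) F) R)"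

definition XF :: "real poly mat \<Rightarrow> (nat \<Rightarrow> real poly) set" where
  "XF R = toF ` state_space R"

context
  fixes R :: "real poly mat" and w :: nat
  assumes R: "R \<in> carrier_mat w w" and dR: "det R \<noteq> 0"
begin

lemma mod_row_add:
  assumes f: "f \<in> carrier_vec w" and g: "g \<in> carrier_vec w"
  shows "mod_row (f + g) R = mod_row f R + mod_row g R"
proof -
  obtain hf where hf: "hf \<in> carrier_vec w" "f = mod_row f R + vm hf R" using mod_row_props(2)[OF R dR f] by blast
  obtain hg where hg: "hg \<in> carrier_vec w" "g = mod_row g R + vm hg R" using mod_row_props(2)[OF R dR g] by blast
  have mf: "mod_row f R \<in> carrier_vec w" and mg: "mod_row g R \<in> carrier_vec w"
    using mod_row_props(1)[OF R dR f] mod_row_props(1)[OF R dR g] ss_iff[OF R] by auto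
  have x: "vm hf R \<in> carrier_vec w" "vm hg R \<in> carrier_vec w" using R by auto
  have "f + g = (mod_row f R + vm hf R) + (mod_row g R + vm hg R)" using hf hg by simp
  also have "\<dots> = (mod_row f R + mod_row g R) + (vm hf R + vm hg R)"
    using mf mg x by (intro eq_vecI) (auto simp: algebra_simps)
  also have "vm hf R + vm hg R = vm (hf + hg) R" using vm_add[OF hf(1) hg(1) R] by simp
  finally have "f + g = (mod_row f R + mod_row g R) + vm (hf + hg) R" .
  moreover have "mod_row f R + mod_row g R \<in> state_space R"
    using ss_add[OF R dR] mod_row_props(1)[OF R dR f] mod_row_props(1)[OF R dR g] by blast
  ultimately show ?thesis using mod_row_eq[OF R dR _ add_carrier_vec[OF hf(1) hg(1)]] by simp
qed

lemma mod_row_scal: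
  assumes f: "f \<in> carrier_vec w"
  shows "mod_row ([:c:] \<cdot>\<^sub>v f) R = [:c:] \<cdot>\<^sub>v mod_row f R"
proof -
  obtain hf where hf: "hf \<in> carrier_vec w" "f = mod_row f R + vm hf R" using mod_row_props(2)[OF R dR f] by blast
  have mf: "mod_row f R \<in> carrier_vec w"
    using mod_row_props(1)[OF R dR f] ss_iff[OF R] by auto
  have x: "vm hf R \<in> carrier_vec w" using R by auto
  have "[:c:] \<cdot>\<^sub>v f = [:c:] \<cdot>\<^sub>v (mod_row f R + vm hf R)" using hf by simp
  also have "\<dots> = [:c:] \<cdot>\<^sub>v mod_row f R + [:c:] \<cdot>\<^sub>v vm hf R"
    using mf x R by (intro eq_vecI) (auto simp: algebra_simps)
  also have "[:c:] \<cdot>\<^sub>v vm hf R = vm ([:c:] \<cdot>\<^sub>v hf) R" using vm_smult[OF hf(1) R] by simp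
  finally have "[:c:] \<cdot>\<^sub>v f = [:c:] \<cdot>\<^sub>v mod_row f R + vm ([:c:] \<cdot>\<^sub>v hf) R" .
  moreover have "[:c:] \<cdot>\<^sub>v mod_row f R \<in> state_space R"
    unfolding smult_vec_eq using ss_smult[OF R dR] mod_row_props(1)[OF R dR f] by blast
  ultimately show ?thesis using mod_row_eq[OF R dR _ smult_carrier_vec[THEN iffD2, OF hf(1)]] by simp
qed

lemma mod_row_minus:
  assumes f: "f \<in> carrier_vec w" and h: "h \<in> carrier_vec w"
  shows "mod_row (f - vm h R) R = mod_row f R"
proof -
  obtain hf where hf: "hf \<in> carrier_vec w" "f = mod_row f R + vm hf R" using mod_row_props(2)[OF R dR f] by blast
  have mf: "mod_row f R \<in> carrier_vec w"
    using mod_row_props(1)[OF R dR f] ss_iff[OF R] by auto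
  have x: "vm hf R \<in> carrier_vec w" "vm h R \<in> carrier_vec w" using R by auto
  have "f - vm h R = (mod_row f R + vm hf R) - vm h R" using hf by simp
  also have "\<dots> = mod_row f R + (vm hf R - vm h R)"
    using mf x by (intro eq_vecI) (auto simp: algebra_simps)
  also have "vm hf R - vm h R = vm (hf - h) R" using vm_minus[OF hf(1) h R] by simp
  finally have "f - vm h R = mod_row f R + vm (hf - h) R" .
  then show ?thesis using mod_row_eq[OF R dR mod_row_props(1)[OF R dR f]] hf h by simp
qed

lemma modF_hom: "module_hom sc sc (modF R)"
proof unfold_locales
  fix F G :: "nat \<Rightarrow> real poly"
  have "vec (dim_row R) (F + G) = vec w F + vec w G" using R by (intro eq_vecI) auto
  then show "modF R (F + G) = modF R F + modF R G"
    unfolding modF_def using R mod_row_add[of "vec w F" "vec w G"]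
      toF_add[of "mod_row (vec w F) R" w "mod_row (vec w G) R"]
      mod_row_props(1)[OF R dR, of "vec w F"] mod_row_props(1)[OF R dR, of "vec w G"] ss_iff[OF R]
    by auto
next
  fix c and F :: "nat \<Rightarrow> real poly"
  have "vec (dim_row R) (sc c F) = [:c:] \<cdot>\<^sub>v vec w F" using R by (intro eq_vecI) (auto simp: sc_def)
  then show "modF R (sc c F) = sc c (modF R F)"
    unfolding modF_def using R mod_row_scal[of "vec w F" c] toF_smult by auto
qed

end



lemma fun_sum_apply: "(sum f A) x = sum (\<lambda>a. f a x) A"
  by (induction A rule: infinite_finite_induct) auto

lemma XF_subspace:
  assumes R: "R \<in> carrier_mat w w" and dR: "det R \<noteq> 0"
  shows "VS.subspace (XF R)"
  unfolding VS.subspace_def XF_def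
proof (intro conjI ballI allI)
  show "0 \<in> toF ` state_space R" using ss_zero[OF R dR] toF_zero[of w] by (metis image_eqI)
next
  fix x y assume "x \<in> toF ` state_space R" "y \<in> toF ` state_space R"
  then obtain f g where fg: "f \<in> state_space R" "g \<in> state_space R" "x = toF f" "y = toF g" by blast
  have "x + y = toF (f + g)" using fg toF_add[of f w g] ss_iff[OF R] by auto
  then show "x + y \<in> toF ` state_space R" using ss_add[OF R dR fg(1,2)] by blast
next
  fix c x assume "x \<in> toF ` state_space R"
  then obtain f where f: "f \<in> state_space R" "x = toF f" by blast
  have "sc c x = toF (map_vec (smult c) f)" using f toF_smult[of c f] unfolding smult_vec_eq by simp
  then show "sc c x \<in> toF ` state_space R" using ss_smult[OF R dR f(1)] by blast
qed

definition ef :: "nat \<Rightarrow> nat \<Rightarrow> nat \<Rightarrow> real poly" where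
  "ef j k = (\<lambda>i. if i = j then monom 1 k else 0)"

lemma poly_sum_monoms:
  assumes "p = 0 \<or> degree p < d"
  shows "(\<Sum>k\<in>{0..<d}. monom (coeff p k) k) = p"
proof (rule poly_eqI)
  fix m
  have "coeff (\<Sum>k\<in>{0..<d}. monom (coeff p k) k) m = (\<Sum>k\<in>{0..<d}. if k = m then coeff p k else 0)"
    by (simp add: coeff_sum coeff_monom)
  also have "\<dots> = (if m < d then coeff p m else 0)" by (simp add: sum.delta')
  also have "\<dots> = coeff p m" using assms by (auto simp: coeff_eq_0)
  finally show "coeff (\<Sum>k\<in>{0..<d}. monom (coeff p k) k) m = coeff p m" .
qed

lemma basis_exists:
  assumes R: "R \<in> carrier_mat w w" and dR: "det R \<noteq> 0"
  shows "\<exists>B. finite B \<and> card B = degree (det R) \<and> VS.independent B \<and> B \<subseteq> XF R \<and> XF R \<subseteq> VS.span B"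
proof -
  obtain T where rq: "req w R T" and ut: "upper_triangular T" using triangularize[OF R] by blast
  have Tc: "T \<in> carrier_mat w w" and rT: "rowmod T = rowmod R" and dT: "det T = det R \<or> det T = - det R"
    using rq unfolding req_def by auto
  have dT0: "det T \<noteq> 0" using dT dR by auto
  have detT: "det T = (\<Prod>j\<in>{0..<w}. T $$ (j,j))"
    using det_upper_triangular[OF ut Tc] Tc
    by (simp add: diag_mat_def prod.distinct_set_conv_list[symmetric])
  have dg: "\<forall>j<w. T $$ (j,j) \<noteq> 0" using dT0 detT by auto
  have degdet: "degree (det R) = (\<Sum>j\<in>{0..<w}. degree (T $$ (j,j)))"
  proof -
    have "degree (det R) = degree (det T)" using dT by auto
    also have "\<dots> = (\<Sum>j\<in>{0..<w}. degree (T $$ (j,j)))"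
      unfolding detT using dg by (intro degree_prod_eq_sum_degree) auto
    finally show ?thesis .
  qed
  define P where "P = Sigma {0..<w} (\<lambda>j. {0..<degree (T $$ (j,j))})"
  have finP: "finite P" unfolding P_def by auto
  have cardP: "card P = degree (det R)" unfolding P_def degdet by (simp add: card_SigmaI)
  define e where "e = (\<lambda>(j,k). ef j k)"
  define E where "E = e ` P"
  define SF :: "(nat \<Rightarrow> real poly) set" where "SF = {F. (\<forall>i. i \<ge> w \<longrightarrow> F i = 0) \<and> (\<forall>i<w. F i = 0 \<or> degree (F i) < degree (T $$ (i,i)))}"
  have finE: "finite E" unfolding E_def using finP by simp
  have inj_e: "inj_on e P"
  proof (rule inj_onI)
    fix x y assume xy: "x \<in> P" "y \<in> P" "e x = e y"
    obtain j k where x: "x = (j,k)" by (cases x)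
    obtain j' k' where y: "y = (j',k')" by (cases y)
    have "ef j k j = ef j' k' j" using xy x y e_def by simp
    then have "monom 1 k = (if j = j' then monom 1 k' else (0 :: real poly))" unfolding ef_def by simp
    then have "j = j' \<and> k = k'" by (metis monom_eq_iff' one_neq_zero monom_eq_0_iff)
    then show "x = y" using x y by simp
  qed
  have cardE: "card E = degree (det R)" unfolding E_def using card_image[OF inj_e] cardP by simp
  have SF_add: "x + y \<in> SF" if x: "x \<in> SF" and y: "y \<in> SF" for x y
  proof -
    have "x i + y i = 0 \<or> degree (x i + y i) < degree (T $$ (i, i))" if i: "i < w" for i
    proof (cases "x i = 0 \<or> y i = 0")
      case True then show ?thesis using x y i unfolding SF_def by auto
    next
      case False
      then have "degree (x i) < degree (T $$ (i, i))" "degree (y i) < degree (T $$ (i, i))"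
        using x y i unfolding SF_def by auto
      then show ?thesis using degree_add_le_max[of "x i" "y i"] by linarith
    qed
    then show ?thesis using x y unfolding SF_def by auto
  qed
  have SF_sc: "sc c x \<in> SF" if x: "x \<in> SF" for c x
  proof -
    have "sc c x i = 0 \<or> degree (sc c x i) < degree (T $$ (i, i))" if i: "i < w" for i
      using x i degree_smult_le[of c "x i"] unfolding sc_def SF_def by auto
    then show ?thesis using x unfolding SF_def sc_def by auto
  qed
  have SF_sub: "VS.subspace SF"
    unfolding VS.subspace_def using SF_add SF_sc by (auto simp: SF_def)
  have E_SF: "E \<subseteq> SF"
    unfolding E_def SF_def e_def P_def ef_def by (auto simp: degree_monom_eq)
  have spanE_SF: "VS.span E \<subseteq> SF" using VS.span_minimal[OF E_SF SF_sub] .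
  have SF_spanE: "SF \<subseteq> VS.span E"
  proof
    fix F assume F: "F \<in> SF"
    have "F = (\<Sum>p\<in>P. sc (coeff (F (fst p)) (snd p)) (e p))"
    proof (rule ext)
      fix i
      have "(\<Sum>p\<in>P. sc (coeff (F (fst p)) (snd p)) (e p)) i
          = (\<Sum>p\<in>P. smult (coeff (F (fst p)) (snd p)) (e p i))"
        by (simp add: fun_sum_apply sc_def)
      also have "\<dots> = (\<Sum>(j,k)\<in>P. (if i = j then monom (coeff (F j) k) k else 0))"
        by (rule sum.cong) (auto simp: e_def ef_def smult_monom)
      also have "\<dots> = (\<Sum>j\<in>{0..<w}. \<Sum>k\<in>{0..<degree (T $$ (j,j))}.
                   (if i = j then monom (coeff (F j) k) k else 0))"
        unfolding P_def by (rule sum.Sigma[symmetric]) auto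
      also have "\<dots> = (\<Sum>j\<in>{0..<w}. if i = j then (\<Sum>k\<in>{0..<degree (T $$ (j,j))}. monom (coeff (F j) k) k) else 0)"
        by (rule sum.cong) auto
      also have "\<dots> = F i"
      proof (cases "i < w")
        case True
        then have "F i = 0 \<or> degree (F i) < degree (T $$ (i,i))" using F unfolding SF_def by auto
        then show ?thesis using True by (simp add: sum.delta' poly_sum_monoms)
      next
        case False
        then show ?thesis using F unfolding SF_def by (simp add: sum.delta')
      qed
      finally show "F i = (\<Sum>p\<in>P. sc (coeff (F (fst p)) (snd p)) (e p)) i" by simp
    qed
    also have "\<dots> \<in> VS.span E"
      by (intro VS.span_sum VS.span_scale VS.span_base) (auto simp: E_def)
    finally show "F \<in> VS.span E" .
  qed
  have indE: "VS.independent E"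
  proof
    assume "VS.dependent E"
    then obtain u v0 where v0: "v0 \<in> E" "u v0 \<noteq> 0" and s: "(\<Sum>v\<in>E. sc (u v) v) = 0"
      using VS.dependent_finite[OF finE] by blast
    obtain j0 k0 where jk0: "(j0,k0) \<in> P" "v0 = ef j0 k0" using v0 unfolding E_def e_def by auto
    have "0 = coeff ((\<Sum>v\<in>E. sc (u v) v) j0) k0" using s by simp
    also have "\<dots> = (\<Sum>v\<in>E. u v * coeff (v j0) k0)"
      by (simp add: fun_sum_apply sc_def coeff_sum)
    also have "\<dots> = (\<Sum>v\<in>E. if v = v0 then u v else 0)"
    proof (rule sum.cong)
      fix v assume "v \<in> E"
      then obtain j k where v: "v = ef j k" unfolding E_def e_def by auto
      show "u v * coeff (v j0) k0 = (if v = v0 then u v else 0)"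
      proof (cases "j = j0 \<and> k = k0")
        case True then show ?thesis using v jk0 by (simp add: ef_def)
      next
        case False
        have c0: "coeff (v j0) k0 = 0" using False v by (auto simp: ef_def coeff_monom)
        moreover have "coeff (v0 j0) k0 = 1" using jk0 by (simp add: ef_def)
        ultimately have "v \<noteq> v0" by auto
        then show ?thesis using c0 by simp
      qed
    qed simp
    also have "\<dots> = u v0" using v0 finE by (simp add: sum.delta')
    finally show False using v0 by simp
  qed
  have mh: "module_hom sc sc (modF R)" using modF_hom[OF R dR] .
  have ker: "F = 0" if F: "F \<in> SF" and mF: "modF R F = 0" for F
  proof -
    define f where "f = vec w F"
    have fc: "f \<in> carrier_vec w" unfolding f_def by simp
    have mc: "mod_row f R \<in> carrier_vec w" using mod_row_props(1)[OF R dR fc] ss_iff[OF R] by auto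
    have "toF (mod_row f R) = toF (0\<^sub>v w)" using mF R unfolding modF_def f_def by simp
    then have m0: "mod_row f R = 0\<^sub>v w" using toF_inj[OF mc] by simp
    obtain h where h: "h \<in> carrier_vec w" "f = mod_row f R + vm h R" using mod_row_props(2)[OF R dR fc] by blast
    have "f = vm h R" using h m0 R by simp
    then have "f \<in> rowmod T" using rT h R unfolding rowmod_def by auto
    then obtain h' where h': "h' \<in> carrier_vec w" "f = vm h' T" using Tc unfolding rowmod_def by auto
    have "Sred T (vm h' T)" unfolding Sred_def h'(2)[symmetric] using F unfolding SF_def f_def by auto
    then have "h' = 0\<^sub>v w" using red_zero[OF Tc ut dg h'(1)] by simp
    then have "f = 0\<^sub>v w" using h' vm_zero[OF Tc] by simp
    then have "\<forall>i<w. F i = 0" unfolding f_def by (metis index_vec index_zero_vec(1))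
    then have lo: "\<And>i. i < w \<Longrightarrow> F i = 0" by blast
    have hi: "\<And>i. w \<le> i \<Longrightarrow> F i = 0" using F unfolding SF_def by blast
    show "F = 0"
    proof (rule ext)
      fix i show "F i = 0 i" using lo[of i] hi[of i] by (cases "i < w") auto
    qed
  qed
  have inj: "inj_on (modF R) (VS.span E)"
    using module_hom.inj_on_iff_eq_0[OF mh VS.subspace_span] spanE_SF ker by blast
  define B where "B = modF R ` E"
  have "card B = degree (det R)" unfolding B_def
    using card_image[OF inj_on_subset[OF inj VS.span_superset]] cardE by simp
  moreover have "finite B" unfolding B_def using finE by simp
  moreover have "VS.independent B"
    unfolding B_def using module_hom.independent_injective_image[OF mh indE inj] .
  moreover have "B \<subseteq> XF R"
  proof
    fix x assume "x \<in> B"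
    then obtain F where "x = modF R F" unfolding B_def by blast
    then show "x \<in> XF R" unfolding modF_def XF_def
      using mod_row_props(1)[OF R dR, of "vec (dim_row R) F"] R by auto
  qed
  moreover have "XF R \<subseteq> VS.span B"
  proof
    fix x assume "x \<in> XF R"
    then obtain g where g: "g \<in> state_space R" "x = toF g" unfolding XF_def by blast
    have gc: "g \<in> carrier_vec w" using g ss_iff[OF R] by simp
    obtain h where h: "h \<in> carrier_vec w" "Sred T (g - vm h T)" using red_exists[OF Tc ut dg gc] by blast
    have "vm h T \<in> rowmod R" using rT h Tc unfolding rowmod_def by auto
    then obtain h' where h': "h' \<in> carrier_vec w" "vm h T = vm h' R" using R unfolding rowmod_def by auto
    define r where "r = g - vm h' R"
    have rc: "r \<in> carrier_vec w" unfolding r_def using gc R by simp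
    have mr: "mod_row r R = g" unfolding r_def using mod_row_minus[OF R dR gc h'(1)] mod_row_ss[OF R dR g(1)] by simp
    have "toF r \<in> SF" unfolding SF_def
    proof (intro CollectI conjI allI impI)
      fix i assume "w \<le> i" then show "toF r i = 0" using toF_supp[OF rc] by simp
    next
      fix i assume i: "i < w"
      have "r = g - vm h T" unfolding r_def h'(2) ..
      then show "toF r i = 0 \<or> degree (toF r i) < degree (T $$ (i, i))"
        using h(2) i rc unfolding Sred_def toF_def by auto
    qed
    then have "toF r \<in> VS.span E" using SF_spanE by blast
    moreover have "modF R (toF r) = x" unfolding modF_def using R vec_toF[OF rc] mr g by simp
    ultimately have "x \<in> modF R ` VS.span E" by blast
    then show "x \<in> VS.span B" unfolding B_def using module_hom.span_image[OF mh] by simp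
  qed
  ultimately show ?thesis by blast
qed




definition matF :: "nat \<Rightarrow> nat \<Rightarrow> (nat \<Rightarrow> real poly) list \<Rightarrow> real poly mat" where
  "matF m w zs = mat m w (\<lambda>(i,j). (zs ! i) j)"

lemma rc_eq:
  "row_comb c (matF m w zs) = vec w (\<Sum>i<m. sc (c i) (zs ! i))"
  unfolding row_comb_def matF_def
  by (intro eq_vecI) (auto simp: fun_sum_apply sc_def intro!: sum.cong)

lemma sum_nth_set:
  assumes "distinct zs"
  shows "(\<Sum>i<length zs. g (zs ! i)) = (\<Sum>v\<in>set zs. g v)"
  using sum.reindex_bij_betw[OF bij_betw_nth[OF assms refl refl], of g] by simp

lemma XF_supp: "x \<in> XF R \<Longrightarrow> R \<in> carrier_mat w w \<Longrightarrow> i \<ge> w \<Longrightarrow> x i = 0"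
  unfolding XF_def using ss_iff toF_supp by blast

lemma msm:
  assumes R: "R \<in> carrier_mat w w" and dR: "det R \<noteq> 0" and d: "distinct zs"
    and sub: "set zs \<subseteq> XF R" and ind: "VS.independent (set zs)" and sp: "XF R \<subseteq> VS.span (set zs)"
  shows "minimal_state_map (matF (length zs) w zs) R"
  unfolding minimal_state_map_def rows_basis_of_def
proof (intro conjI allI impI ballI)
  let ?X = "matF (length zs) w zs"
  show "dim_col ?X = dim_row R" using R unfolding matF_def by simp
  fix i assume i: "i < dim_row ?X"
  then have i': "i < length zs" unfolding matF_def by simp
  then obtain g where g: "g \<in> state_space R" "zs ! i = toF g" using sub unfolding XF_def by (meson nth_mem subsetD imageE)
  have "row ?X i = vec w (zs ! i)" using i' unfolding matF_def by simp
  also have "\<dots> = g" using g vec_toF ss_iff[OF R] by simp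
  finally show "row ?X i \<in> state_space R" using g by simp
next
  let ?X = "matF (length zs) w zs"
  fix c assume z: "row_comb c ?X = 0\<^sub>v (dim_col ?X)"
  have s0: "(\<Sum>i<length zs. sc (c i) (zs ! i)) = 0"
  proof -
    have "vec w (\<Sum>i<length zs. sc (c i) (zs ! i)) = 0\<^sub>v w" using z rc_eq unfolding matF_def by simp
    then have t0: "toF (vec w (\<Sum>i<length zs. sc (c i) (zs ! i))) = 0" by simp
    have zz: "\<forall>x<length zs. \<forall>j\<ge>w. (zs!x) j = 0" using sub XF_supp[OF _ R] nth_mem by blast
    have "\<forall>j\<ge>w. (\<Sum>i<length zs. sc (c i) (zs ! i)) j = 0"
      using zz by (auto simp: fun_sum_apply sc_def intro!: sum.neutral)
    then have "toF (vec w (\<Sum>i<length zs. sc (c i) (zs ! i))) = (\<Sum>i<length zs. sc (c i) (zs ! i))"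
      by (rule toF_vec)
    then show ?thesis using t0 by simp
  qed
  define u where "u v = c (SOME i. i < length zs \<and> zs ! i = v)" for v :: "nat \<Rightarrow> real poly"
  have ui: "u (zs ! i) = c i" if i: "i < length zs" for i
  proof -
    have "(SOME j. j < length zs \<and> zs ! j = zs ! i) = i"
      using i d by (intro some_equality) (auto simp: nth_eq_iff_index_eq)
    then show ?thesis unfolding u_def by simp
  qed
  have "(\<Sum>i<length zs. sc (u (zs ! i)) (zs ! i)) = 0" using s0 ui by simp
  then have "(\<Sum>v\<in>set zs. sc (u v) v) = 0"
    using sum_nth_set[OF d, of "\<lambda>v. sc (u v) v"] by simp
  then have "\<forall>v\<in>set zs. u v = 0" using ind VS.dependent_finite[of "set zs"] by auto
  fix i assume "i < dim_row ?X"
  then have "i < length zs" unfolding matF_def by simp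
  then show "c i = 0" using \<open>\<forall>v\<in>set zs. u v = 0\<close> ui nth_mem by metis
next
  let ?X = "matF (length zs) w zs"
  fix f assume f: "f \<in> state_space R"
  have fc: "f \<in> carrier_vec w" using f ss_iff[OF R] by simp
  have "toF f \<in> VS.span (set zs)" using f sp unfolding XF_def by blast
  then obtain u where u: "toF f = (\<Sum>v\<in>set zs. sc (u v) v)" using VS.span_finite[of "set zs"] by auto
  have "f = vec w (toF f)" using vec_toF[OF fc] by simp
  also have "\<dots> = vec w (\<Sum>i<length zs. sc (u (zs ! i)) (zs ! i))" using u sum_nth_set[OF d, of "\<lambda>v. sc (u v) v"] by simp
  also have "\<dots> = row_comb (\<lambda>i. u (zs ! i)) ?X" using rc_eq by simp
  finally show "\<exists>c. f = row_comb c ?X" by blast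
qed

theorem lemma1:
  fixes R1 R2 :: "real poly mat" and w :: nat
  assumes "0 < w" and "R1 \<in> carrier_mat w w" and "R2 \<in> carrier_mat w w"
    and "nonsingular R1" and "nonsingular R2"
    and "strictly_proper_mat (lift_mat R2 * rat_inverse R1)"
  shows "degree (det R2) < degree (det R1) \<and>
    (\<exists>X1' X2. X1' \<in> carrier_mat (degree (det R1) - degree (det R2)) w \<and>
              X2 \<in> carrier_mat (degree (det R2)) w \<and>
              minimal_state_map X2 R2 \<and>
              minimal_state_map (X2 @\<^sub>r X1') R1 \<and>
              (\<exists>Pm. Pm \<in> carrier_mat (degree (det R1) - degree (det R2)) (degree (det R2)) \<and>
                   mod_mat X1' R2 = const_mat Pm * X2))"
proof -
  note w = assms(1) and R1 = assms(2) and R2 = assms(3) and sp = assms(6)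
  have d1: "det R1 \<noteq> 0" and d2: "det R2 \<noteq> 0" using assms(4,5) unfolding nonsingular_def by auto
  define n1 where "n1 = degree (det R1)"
  define n2 where "n2 = degree (det R2)"
  have lt: "n2 < n1" unfolding n1_def n2_def using deg_less[OF R1 d1 R2 d2 w sp] .
  have incl: "XF R2 \<subseteq> XF R1" unfolding XF_def using ss_incl[OF R1 d1 R2 d2 sp] by blast
  obtain B2 where B2: "finite B2" "card B2 = n2" "VS.independent B2" "B2 \<subseteq> XF R2" "XF R2 \<subseteq> VS.span B2"
    using basis_exists[OF R2 d2] unfolding n2_def by blast
  obtain C1 where C1: "finite C1" "card C1 = n1" "VS.independent C1" "C1 \<subseteq> XF R1" "XF R1 \<subseteq> VS.span C1"
    using basis_exists[OF R1 d1] unfolding n1_def by blast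
  obtain B1 where B1: "B2 \<subseteq> B1" "B1 \<subseteq> XF R1" "VS.independent B1" "XF R1 \<subseteq> VS.span B1"
    using VS.maximal_independent_subset_extend[of B2 "XF R1"] B2 incl by blast
  have fB1: "finite B1" and cB1: "card B1 \<le> n1"
    using VS.independent_span_bound[OF C1(1) B1(3)] B1(2) C1(5) C1(2) by auto
  have "n1 \<le> card B1" using VS.independent_span_bound[OF fB1 C1(3)] C1(4) B1(4) C1(2) by auto
  then have cB1': "card B1 = n1" using cB1 by simp
  obtain xs where xs: "distinct xs" "set xs = B2" using finite_distinct_list[OF B2(1)] by blast
  obtain ys where ys: "distinct ys" "set ys = B1 - B2" using finite_distinct_list[of "B1 - B2"] fB1 by blast
  have lxs: "length xs = n2" using xs B2(2) distinct_card by metis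
  have "card (B1 - B2) = n1 - n2" using card_Diff_subset[OF B2(1) B1(1)] cB1' B2(2) by simp
  then have lys: "length ys = n1 - n2" using ys distinct_card by metis
  define X2 where "X2 = matF n2 w xs"
  define X1' where "X1' = matF (n1 - n2) w ys"
  have X2c: "X2 \<in> carrier_mat n2 w" unfolding X2_def matF_def by simp
  have X1c: "X1' \<in> carrier_mat (n1 - n2) w" unfolding X1'_def matF_def by simp
  have "minimal_state_map X2 R2"
    unfolding X2_def lxs[symmetric]
    using msm[OF R2 d2 xs(1)] xs B2 by simp
  moreover have "minimal_state_map (X2 @\<^sub>r X1') R1"
  proof -
    have app: "X2 @\<^sub>r X1' = matF (length (xs @ ys)) w (xs @ ys)"
      unfolding X2_def X1'_def matF_def append_rows_def using lxs lys lt
      by (intro eq_matI) (auto simp: nth_append)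
    have dz: "distinct (xs @ ys)" using xs ys by auto
    have sz: "set (xs @ ys) = B1" using xs ys B1(1) by auto
    show ?thesis unfolding app using msm[OF R1 d1 dz, unfolded sz] B1 by blast
  qed
  moreover have "\<exists>Pm. Pm \<in> carrier_mat (n1 - n2) n2 \<and> mod_mat X1' R2 = const_mat Pm * X2"
  proof -
    have "\<forall>i. \<exists>p. i < n1 - n2 \<longrightarrow> toF (mod_row (row X1' i) R2) = (\<Sum>l<n2. sc (p l) (xs ! l))"
    proof (intro allI)
      fix i
      show "\<exists>p. i < n1 - n2 \<longrightarrow> toF (mod_row (row X1' i) R2) = (\<Sum>l<n2. sc (p l) (xs ! l))"
      proof (cases "i < n1 - n2")
        case True
        have "row X1' i = vec w (ys ! i)" using True unfolding X1'_def matF_def by simp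
        then have rc: "row X1' i \<in> carrier_vec w" by simp
        have "toF (mod_row (row X1' i) R2) \<in> XF R2"
          unfolding XF_def using mod_row_props(1)[OF R2 d2 rc] by blast
        then have "toF (mod_row (row X1' i) R2) \<in> VS.span (set xs)" using B2(5) xs by blast
        then obtain u where u: "toF (mod_row (row X1' i) R2) = (\<Sum>v\<in>set xs. sc (u v) v)"
          using VS.span_finite[of "set xs"] by auto
        then have "toF (mod_row (row X1' i) R2) = (\<Sum>l<n2. sc (u (xs ! l)) (xs ! l))"
          using sum_nth_set[OF xs(1), of "\<lambda>v. sc (u v) v"] lxs by simp
        then show ?thesis by (intro exI[of _ "\<lambda>l. u (xs ! l)"]) simp
      qed simp
    qed
    then obtain p where p: "\<And>i. i < n1 - n2 \<Longrightarrow> toF (mod_row (row X1' i) R2) = (\<Sum>l<n2. sc (p i l) (xs ! l))"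
      by metis
    define Pm where "Pm = mat (n1 - n2) n2 (\<lambda>(i,l). p i l)"
    have "mod_mat X1' R2 = const_mat Pm * X2"
    proof (rule eq_matI)
      fix i j assume ij: "i < dim_row (const_mat Pm * X2)" "j < dim_col (const_mat Pm * X2)"
      then have i: "i < n1 - n2" and j: "j < w" unfolding Pm_def const_mat_def X2_def matF_def by auto
      have rc: "row X1' i \<in> carrier_vec w" using i unfolding X1'_def matF_def by simp
      have mc: "mod_row (row X1' i) R2 \<in> carrier_vec w"
        using mod_row_props(1)[OF R2 d2 rc] ss_iff[OF R2] by simp
      have "mod_mat X1' R2 $$ (i,j) = mod_row (row X1' i) R2 $ j"
        unfolding mod_mat_def using i j X1c by simp
      also have "\<dots> = toF (mod_row (row X1' i) R2) j" using mc j unfolding toF_def by simp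
      also have "\<dots> = (\<Sum>l<n2. smult (p i l) ((xs ! l) j))" using p[OF i] by (simp add: fun_sum_apply sc_def)
      also have "\<dots> = (const_mat Pm * X2) $$ (i,j)"
        using i j unfolding Pm_def const_mat_def X2_def matF_def
        by (auto simp: scalar_prod_def atLeast0LessThan intro!: sum.cong)
      finally show "mod_mat X1' R2 $$ (i,j) = (const_mat Pm * X2) $$ (i,j)" .
    qed (auto simp: mod_mat_def Pm_def const_mat_def X2_def X1'_def matF_def)
    moreover have "Pm \<in> carrier_mat (n1 - n2) n2" unfolding Pm_def by simp
    ultimately show ?thesis by blast
  qed
  ultimately show ?thesis using lt X1c X2c unfolding n1_def n2_def by blast
qed


end
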